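(* Let $(\mathcal{S},\mathcal{A},\mathbb{P},\mathbb{T})$ be a Controlled Markov Process, let $s_0\in\mathcal{S}$, and let $\succsim_1,\succsim_2$ be two preference relations over lotteries of finite trajectories of this CMP, each satisfying the VNM axioms and the additivity axiom. If $\succsim_1$ and $\succsim_2$ agree on all pairs of lotteries that start from $s_0$, then they agree on all pairs of lotteries of trajectories that start from states reachable from $s_0$ (a state $s$ is reachable from $s_0$ if there is a finite trajectory from $s_0$ to $s$). That is, the preferences over lotteries starting from $s_0$ uniquely determine all preferences over lotteries of trajectories reachable from $s_0$.
   Context: A CMP is a tuple $(\mathcal{S},\mathcal{A},\mathbb{P},\mathbb{T})$: $\mathcal{S}$ a countable state set, $\mathcal{A}$ an action set, $\mathbb{P}:\mathcal{S}\times\mathcal{A}\to\mathcal{D}(\mathcal{S})\cup\{0\}$ transition distributions ($0$ = illegal), $\mathbb{T}:\mathcal{S}\times\mathcal{A}\times\mathcal{S}\to[0,1]$ termination probabilities. A transition is a triple $(s,a,s')$; a trajectory of length $n\ge1$ is a sequence $\langle(s_i,a_i,s_i')\rangle_{i=1}^n$ of transitions of the CMP with $s_i'=s_{i+1}$, starting at $s_1$ and ending at $s_n'$; for each state $s$, $\epsilon_s$ is the empty trajectory at $s$. Outcomes are the finite trajectories; a lottery is a probability distribution over outcomes, compound lotteries being identified with their reductions. A lottery starts from $s$ if supported on trajectories starting at $s$. Concatenation $\tau\cdot\tau'$ (for $\tau$ ending where $\tau'$ starts) is extended to lotteries by distributing over mixtures. VNM axioms on a preference relation $\succsim$ over lotteries: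 completeness; transitivity; continuity (if $L\succsim M\succsim N$, some $p\in[0,1]$ gives $pL+(1-p)N\approx M$); independence (for all $L,M,N$ and $p\in[0,1)$, $L\succsim M\iff(1-p)L+pN\succsim(1-p)M+pN$). Additivity axiom: for all states $s$, trajectories $\tau_1,\tau_2$ ending at $s$, lotteries $L,M$ starting from $s$, lotteries $N,K$, and $p\in[0,1]$: $p(\tau_1\cdot L)+(1-p)N\succsim p(\tau_1\cdot M)+(1-p)K\iff p(\tau_2\cdot L)+(1-p)N\succsim p(\tau_2\cdot M)+(1-p)K$. *)

theory Defs
  imports "HOL-Probability.Probability"
begin

text \<open>A Controlled Markov Process with countable state type 's and action type 'a
 (the action set is the whole type 'a).  The transition function returns None for
 an illegal action (the "0" of the paper), and Some d for a distribution d over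
 next states.  T gives termination probabilities.\<close>

type_synonym ('s, 'a) transition = "'s \<times> 'a \<times> 's"

definition cmp :: "('s::countable \<Rightarrow> 'a \<Rightarrow> 's pmf option) \<Rightarrow> ('s \<Rightarrow> 'a \<Rightarrow> 's \<Rightarrow> real) \<Rightarrow> bool" where
  "cmp P T \<longleftrightarrow> (\<forall>s a s'. 0 \<le> T s a s' \<and> T s a s' \<le> 1)"

definition is_transition :: "('s \<Rightarrow> 'a \<Rightarrow> 's pmf option) \<Rightarrow> ('s, 'a) transition \<Rightarrow> bool" where
  "is_transition P tr = (case tr of (s, a, s') \<Rightarrow>
      (\<exists>d. P s a = Some d \<and> s' \<in> set_pmf d))"

text \<open>A (finite) trajectory: a start state together with a list of transitions.
 The pair (s, []) is the empty trajectory \<epsilon>_s.\<close>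
type_synonym ('s, 'a) traj = "'s \<times> ('s, 'a) transition list"

fun chain_from :: "'s \<Rightarrow> ('s, 'a) transition list \<Rightarrow> bool" where
  "chain_from s [] = True"
| "chain_from s ((s1, a, s1') # rest) = (s1 = s \<and> chain_from s1' rest)"

definition valid_traj :: "('s \<Rightarrow> 'a \<Rightarrow> 's pmf option) \<Rightarrow> ('s, 'a) traj \<Rightarrow> bool" where
  "valid_traj P \<tau> = (chain_from (fst \<tau>) (snd \<tau>) \<and> (\<forall>tr \<in> set (snd \<tau>). is_transition P tr))"

definition traj_start :: "('s, 'a) traj \<Rightarrow> 's" where
  "traj_start \<tau> = fst \<tau>"

definition traj_end :: "('s, 'a) traj \<Rightarrow> 's" where
  "traj_end \<tau> = (if snd \<tau> = [] then fst \<tau> else snd (snd (last (snd \<tau>))))"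

text \<open>Concatenation (meaningful when the first trajectory ends where the second starts).\<close>
definition traj_concat :: "('s, 'a) traj \<Rightarrow> ('s, 'a) traj \<Rightarrow> ('s, 'a) traj" where
  "traj_concat \<tau> \<tau>' = (fst \<tau>, snd \<tau> @ snd \<tau>')"

definition lottery :: "('s \<Rightarrow> 'a \<Rightarrow> 's pmf option) \<Rightarrow> ('s, 'a) traj pmf \<Rightarrow> bool" where
  "lottery P L = (\<forall>\<tau> \<in> set_pmf L. valid_traj P \<tau>)"

definition starts_from :: "('s, 'a) traj pmf \<Rightarrow> 's \<Rightarrow> bool" where
  "starts_from L s = (\<forall>\<tau> \<in> set_pmf L. traj_start \<tau> = s)"

definition mix :: "real \<Rightarrow> 'b pmf \<Rightarrow> 'b pmf \<Rightarrow> 'b pmf" where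
  "mix p L N = bind_pmf (bernoulli_pmf p) (\<lambda>b. if b then L else N)"

definition concat_lottery :: "('s, 'a) traj \<Rightarrow> ('s, 'a) traj pmf \<Rightarrow> ('s, 'a) traj pmf" where
  "concat_lottery \<tau> L = map_pmf (traj_concat \<tau>) L"

definition indiff :: "('b \<Rightarrow> 'b \<Rightarrow> bool) \<Rightarrow> 'b \<Rightarrow> 'b \<Rightarrow> bool" where
  "indiff R x y = (R x y \<and> R y x)"

definition vnm :: "('s \<Rightarrow> 'a \<Rightarrow> 's pmf option) \<Rightarrow> (('s, 'a) traj pmf \<Rightarrow> ('s, 'a) traj pmf \<Rightarrow> bool) \<Rightarrow> bool" where
  "vnm P R =
    ((\<forall>L M. lottery P L \<longrightarrow> lottery P M \<longrightarrow> R L M \<or> R M L) \<and>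
     (\<forall>L M N. lottery P L \<longrightarrow> lottery P M \<longrightarrow> lottery P N \<longrightarrow> R L M \<longrightarrow> R M N \<longrightarrow> R L N) \<and>
     (\<forall>L M N. lottery P L \<longrightarrow> lottery P M \<longrightarrow> lottery P N \<longrightarrow> R L M \<longrightarrow> R M N \<longrightarrow>
        (\<exists>p\<in>{0..1}. indiff R (mix p L N) M)) \<and>
     (\<forall>L M N p. lottery P L \<longrightarrow> lottery P M \<longrightarrow> lottery P N \<longrightarrow> 0 \<le> p \<longrightarrow> p < 1 \<longrightarrow>
        (R L M \<longleftrightarrow> R (mix (1 - p) L N) (mix (1 - p) M N))))"

definition additive :: "('s \<Rightarrow> 'a \<Rightarrow> 's pmf option) \<Rightarrow> (('s, 'a) traj pmf \<Rightarrow> ('s, 'a) traj pmf \<Rightarrow> bool) \<Rightarrow> bool" where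
  "additive P R =
    (\<forall>s \<tau>1 \<tau>2 L M N K p.
       valid_traj P \<tau>1 \<longrightarrow> valid_traj P \<tau>2 \<longrightarrow> traj_end \<tau>1 = s \<longrightarrow> traj_end \<tau>2 = s \<longrightarrow>
       lottery P L \<longrightarrow> lottery P M \<longrightarrow> starts_from L s \<longrightarrow> starts_from M s \<longrightarrow>
       lottery P N \<longrightarrow> lottery P K \<longrightarrow> 0 \<le> p \<longrightarrow> p \<le> 1 \<longrightarrow>
       (R (mix p (concat_lottery \<tau>1 L) N) (mix p (concat_lottery \<tau>1 M) K) \<longleftrightarrow>
        R (mix p (concat_lottery \<tau>2 L) N) (mix p (concat_lottery \<tau>2 M) K)))"

definition reachable :: "('s \<Rightarrow> 'a \<Rightarrow> 's pmf option) \<Rightarrow> 's \<Rightarrow> 's \<Rightarrow> bool" where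
  "reachable P s0 s = (\<exists>\<tau>. valid_traj P \<tau> \<and> traj_start \<tau> = s0 \<and> traj_end \<tau> = s)"

end

theory Submission
  imports Defs
begin

lemma chain_append:
  "chain_from a xs \<Longrightarrow> chain_from (if xs = [] then a else snd (snd (last xs))) ys
   \<Longrightarrow> chain_from a (xs @ ys)"
proof (induction xs arbitrary: a)
  case Nil then show ?case by simp
next
  case (Cons x xs)
  obtain s1 b s1' where x: "x = (s1, b, s1')" by (cases x) auto
  show ?case using Cons x by (cases xs) auto
qed

lemma valid_concat:
  assumes "valid_traj P \<tau>" "traj_end \<tau> = s" "valid_traj P \<tau>'" "fst \<tau>' = s"
  shows "valid_traj P (traj_concat \<tau> \<tau>')"
  using assms chain_append[of "fst \<tau>" "snd \<tau>" "snd \<tau>'"]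
  unfolding valid_traj_def traj_concat_def traj_end_def by auto

lemma bern1: "bernoulli_pmf 1 = return_pmf True"
  by (rule pmf_eqI) (auto split: split_indicator)

lemma mix1: "mix 1 X N = X"
  unfolding mix_def bern1 by (simp add: bind_return_pmf)

lemma concat_lottery_lottery:
  assumes "valid_traj P \<tau>" "traj_end \<tau> = s" "lottery P L" "starts_from L s"
  shows "lottery P (concat_lottery \<tau> L)" "starts_from (concat_lottery \<tau> L) (traj_start \<tau>)"
  using assms valid_concat[of P \<tau> s]
  unfolding lottery_def starts_from_def concat_lottery_def traj_start_def traj_concat_def
  by auto

lemma concat_eps:
  assumes "starts_from L s"
  shows "concat_lottery (s, []) L = L"
proof -
  have "concat_lottery (s, []) L = map_pmf id L"
    unfolding concat_lottery_def
    by (rule map_pmf_cong) (use assms in \<open>auto simp: starts_from_def traj_start_def traj_concat_def\<close>)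
  then show ?thesis by simp
qed

lemma additiveD:
  assumes "additive P R" "valid_traj P t1" "valid_traj P t2" "traj_end t1 = s" "traj_end t2 = s"
    "lottery P L" "lottery P M" "starts_from L s" "starts_from M s"
    "lottery P N" "lottery P K" "0 \<le> p" "p \<le> 1"
  shows "R (mix p (concat_lottery t1 L) N) (mix p (concat_lottery t1 M) K) \<longleftrightarrow>
         R (mix p (concat_lottery t2 L) N) (mix p (concat_lottery t2 M) K)"
  using assms unfolding additive_def by blast

lemma reduce:
  assumes "additive P R" "valid_traj P \<tau>" "traj_end \<tau> = s"
    "lottery P L" "lottery P M" "starts_from L s" "starts_from M s"
  shows "R L M \<longleftrightarrow> R (concat_lottery \<tau> L) (concat_lottery \<tau> M)"
proof -
  have v: "valid_traj P (s, [])" by (simp add: valid_traj_def)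
  have e: "traj_end (s, []) = s" by (simp add: traj_end_def)
  have "R (mix 1 (concat_lottery \<tau> L) L) (mix 1 (concat_lottery \<tau> M) M) \<longleftrightarrow>
        R (mix 1 (concat_lottery (s, []) L) L) (mix 1 (concat_lottery (s, []) M) M)"
    by (rule additiveD[OF assms(1) assms(2) v assms(3) e assms(4-7) assms(4,5)]) simp_all
  then show ?thesis using concat_eps[OF assms(6)] concat_eps[OF assms(7)] by (simp add: mix1)
qed

theorem proposition3:
  fixes P :: "'s::countable \<Rightarrow> 'a \<Rightarrow> 's pmf option"
    and T :: "'s \<Rightarrow> 'a \<Rightarrow> 's \<Rightarrow> real"
    and s0 :: 's
    and R1 R2 :: "('s, 'a) traj pmf \<Rightarrow> ('s, 'a) traj pmf \<Rightarrow> bool"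
  assumes "cmp P T"
    and "vnm P R1" and "additive P R1"
    and "vnm P R2" and "additive P R2"
    and agree0: "\<forall>L M. lottery P L \<longrightarrow> lottery P M \<longrightarrow> starts_from L s0 \<longrightarrow> starts_from M s0 \<longrightarrow>
                  (R1 L M \<longleftrightarrow> R2 L M)"
  shows "\<forall>s L M. reachable P s0 s \<longrightarrow> lottery P L \<longrightarrow> lottery P M \<longrightarrow>
           starts_from L s \<longrightarrow> starts_from M s \<longrightarrow> (R1 L M \<longleftrightarrow> R2 L M)"
proof (intro allI impI)
  fix s L M
  assume r: "reachable P s0 s" and l: "lottery P L" "lottery P M"
    and st: "starts_from L s" "starts_from M s"
  obtain \<tau> where t: "valid_traj P \<tau>" "traj_start \<tau> = s0" "traj_end \<tau> = s"
    using r unfolding reachable_def by blast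
  have a: "lottery P (concat_lottery \<tau> L)" "starts_from (concat_lottery \<tau> L) s0"
    using concat_lottery_lottery[OF t(1,3) l(1) st(1)] t(2) by auto
  have b: "lottery P (concat_lottery \<tau> M)" "starts_from (concat_lottery \<tau> M) s0"
    using concat_lottery_lottery[OF t(1,3) l(2) st(2)] t(2) by auto
  show "R1 L M \<longleftrightarrow> R2 L M"
    using reduce[OF assms(3) t(1,3) l st] reduce[OF assms(5) t(1,3) l st] agree0 a b by blast
qed

end
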